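(* For the full-order LQO system $G$ and the reduced-order LQO system $G_k$ described in the context, the squared frequency-limited $\mathcal{H}_2$ norm of the error satisfies $$\|G-G_k\|_{\mathcal{H}_{2,\omega}}^2=\|G\|_{\mathcal{H}_{2,\omega}}^2-2\langle G,G_k\rangle_{\mathcal{H}_{2,\omega}}+\|G_k\|_{\mathcal{H}_{2,\omega}}^2,$$ where the $\mathcal{H}_{2,\omega}$ inner product equals $\langle G,G_k\rangle_{\mathcal{H}_{2,\omega}}=\operatorname{trace}\big(B^T(Y_{12,\omega}+Z_{12,\omega})B_k\big)=\operatorname{trace}(B^TQ_{12,\omega}B_k)$.
   Context: Consider the linear quadratic output (LQO) system $G$: $\dot x(t)=Ax(t)+Bu(t)$, $y(t)=Cx(t)+[x(t)^TM_1x(t);\dots;x(t)^TM_px(t)]$ with $A\in\mathbb{R}^{n\times n}$ Hurwitz, $B\in\mathbb{R}^{n\times m}$, $C\in\mathbb{R}^{p\times n}$, $M_i=M_i^T\in\mathbb{R}^{n\times n}$, and a reduced-order LQO system $G_k$ with realization $(A_k,B_k,C_k,M_{k,1},\dots,M_{k,p})$ of order $k$, $A_k$ Hurwitz. Their transfer functions are $G_1(s)=C(sI-A)^{-1}B$, $G_{2,i}(s_1,s_2)=B^T(s_1I-A)^{-*}M_i(s_2I-A)^{-1}B$, and analogously $G_{k,1}$, $G_{k,2,i}$ with the reduced matrices. The frequency-limited $\mathcal{H}_2$ norm on $[0,\omega]$ rad/sec is given by $\|G\|_{\mathcal{H}_{2,\omega}}^2=\operatorname{trace}\Big(\frac{1}{2\pi}\int_{-\omega}^{\omega}G_1^*(j\nu)G_1(j\nu)d\nu+\frac{1}{(2\pi)^2}\int_{-\omega}^{\omega}\int_{-\omega}^{\omega}\sum_{i=1}^pG_{2,i}^*(j\nu_1,j\nu_2)G_{2,i}(j\nu_1,j\nu_2)d\nu_1d\nu_2\Big)$,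 and the $\mathcal{H}_{2,\omega}$ inner product is $\langle G,G_k\rangle_{\mathcal{H}_{2,\omega}}=\frac{1}{2\pi}\int_{-\omega}^{\omega}\operatorname{trace}\big(G_1^*(j\nu)G_{k,1}(j\nu)\big)d\nu+\frac{1}{4\pi^2}\operatorname{trace}\Big(\int_{-\omega}^{\omega}\int_{-\omega}^{\omega}\sum_{i=1}^pG_{2,i}^*(j\nu_1,j\nu_2)G_{k,2,i}(j\nu_1,j\nu_2)d\nu_1d\nu_2\Big)$. Let $F_\omega=\frac{1}{2\pi}\int_{-\omega}^{\omega}(j\nu I-A)^{-1}d\nu$ and $F_{k,\omega}=\frac{1}{2\pi}\int_{-\omega}^{\omega}(j\nu I-A_k)^{-1}d\nu$. Let $P_{12,\omega}$ solve $AP_{12,\omega}+P_{12,\omega}A_k^T+F_\omega BB_k^T+BB_k^TF_{k,\omega}^*=0$, $Y_{12,\omega}$ solve $A^TY_{12,\omega}+Y_{12,\omega}A_k+F_\omega^*C^TC_k+C^TC_kF_{k,\omega}=0$, $Z_{12,\omega}$ solve $A^TZ_{12,\omega}+Z_{12,\omega}A_k+\sum_{i=1}^p(F_\omega^*M_iP_{12,\omega}M_{k,i}+M_iP_{12,\omega}M_{k,i}F_{k,\omega})=0$, and $Q_{12,\omega}=Y_{12,\omega}+Z_{12,\omega}$. Equivalently $Y_{12,\omega}=\frac{1}{2\pi}\int_{-\omega}^{\omega}(j\nu I-A)^{-*}C^TC_k(j\nu I-A_k)^{-1}d\nu$ and $Z_{12,\omega}$ is the analogous double integral involving $\sum_i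 M_i(\cdot)M_{k,i}$. *)

theory Defs
  imports "HOL-Analysis.Analysis"
begin

definition cmat :: "real^'c^'r \<Rightarrow> complex^'c^'r" where
  "cmat X = map_matrix complex_of_real X"

definition ctrans :: "complex^'c^'r \<Rightarrow> complex^'r^'c" where
  "ctrans X = transpose (map_matrix cnj X)"

definition hurwitz :: "real^'n^'n \<Rightarrow> bool" where
  "hurwitz A \<longleftrightarrow> (\<forall>(lam::complex) (v::complex^'n). v \<noteq> 0 \<and> cmat A *v v = lam *s v \<longrightarrow> Re lam < 0)"

definition resolvent :: "real^'n^'n \<Rightarrow> complex \<Rightarrow> complex^'n^'n" where
  "resolvent A s = matrix_inv (mat s - cmat A)"

definition tf1 :: "real^'n^'n \<Rightarrow> real^'m^'n \<Rightarrow> real^'n^'p \<Rightarrow> complex \<Rightarrow> complex^'m^'p" where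
  "tf1 A B C s = cmat C ** resolvent A s ** cmat B"

definition tf2 :: "real^'n^'n \<Rightarrow> real^'m^'n \<Rightarrow> ('p \<Rightarrow> real^'n^'n) \<Rightarrow> 'p \<Rightarrow> complex \<Rightarrow> complex \<Rightarrow> complex^'m^'m" where
  "tf2 A B M i s1 s2 = transpose (cmat B) ** ctrans (resolvent A s1) ** cmat (M i) ** resolvent A s2 ** cmat B"

definition h2w_norm_sq :: "real \<Rightarrow> (complex \<Rightarrow> complex^'m^'p)
    \<Rightarrow> ('p::finite \<Rightarrow> complex \<Rightarrow> complex \<Rightarrow> complex^'m^'m) \<Rightarrow> complex" where
  "h2w_norm_sq w H1 H2 = trace (
     (1 / (2*pi)) *\<^sub>R integral {-w..w} (\<lambda>\<nu>. ctrans (H1 (\<i> * of_real \<nu>)) ** H1 (\<i> * of_real \<nu>))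
   + (1 / (2*pi)^2) *\<^sub>R integral {-w..w} (\<lambda>\<nu>1. integral {-w..w} (\<lambda>\<nu>2.
        \<Sum>i\<in>UNIV. ctrans (H2 i (\<i> * of_real \<nu>1) (\<i> * of_real \<nu>2)) ** H2 i (\<i> * of_real \<nu>1) (\<i> * of_real \<nu>2))))"

definition h2w_inner :: "real \<Rightarrow> (complex \<Rightarrow> complex^'m^'p)
    \<Rightarrow> ('p::finite \<Rightarrow> complex \<Rightarrow> complex \<Rightarrow> complex^'m^'m)
    \<Rightarrow> (complex \<Rightarrow> complex^'m^'p)
    \<Rightarrow> ('p \<Rightarrow> complex \<Rightarrow> complex \<Rightarrow> complex^'m^'m) \<Rightarrow> complex" where
  "h2w_inner w H1 H2 K1 K2 =
     (1 / (2*pi)) * integral {-w..w} (\<lambda>\<nu>. trace (ctrans (H1 (\<i> * of_real \<nu>)) ** K1 (\<i> * of_real \<nu>)))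
   + (1 / (4*pi^2)) * trace (integral {-w..w} (\<lambda>\<nu>1. integral {-w..w} (\<lambda>\<nu>2.
        \<Sum>i\<in>UNIV. ctrans (H2 i (\<i> * of_real \<nu>1) (\<i> * of_real \<nu>2)) ** K2 i (\<i> * of_real \<nu>1) (\<i> * of_real \<nu>2))))"

definition Fw :: "real \<Rightarrow> real^'n^'n \<Rightarrow> complex^'n^'n" where
  "Fw w A = (1 / (2*pi)) *\<^sub>R integral {-w..w} (\<lambda>\<nu>. resolvent A (\<i> * of_real \<nu>))"

end

theory Submission
  imports Defs "HOL-Computational_Algebra.Polynomial" "HOL-Computational_Algebra.Fundamental_Theorem_Algebra"
begin


section \<open>Basic matrix algebra\<close>

lemma matrix_add_rdistrib: "((A::'a::semiring_1^'n^'m) + B) ** C = A ** C + B ** C"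
  by (simp add: matrix_matrix_mult_def vec_eq_iff distrib_right sum.distrib)
lemma matrix_diff_ldistrib: "(A::'a::ring_1^'n^'m) ** (B - C) = A ** B - A ** C"
  by (simp add: matrix_matrix_mult_def vec_eq_iff right_diff_distrib sum_subtractf)
lemma matrix_diff_rdistrib: "((A::'a::ring_1^'n^'m) - B) ** C = A ** C - B ** C"
  by (simp add: matrix_matrix_mult_def vec_eq_iff left_diff_distrib sum_subtractf)
lemma matrix_mul_0_left[simp]: "(0::'a::semiring_1^'n^'m) ** A = 0"
  by (simp add: matrix_matrix_mult_def vec_eq_iff)
lemma matrix_mul_0_right[simp]: "A ** (0::'a::semiring_1^'n^'m) = 0"
  by (simp add: matrix_matrix_mult_def vec_eq_iff)
lemma matrix_neg_left: "(- (A::'a::ring_1^'n^'m)) ** B = - (A ** B)"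
  by (simp add: matrix_matrix_mult_def vec_eq_iff sum_negf)
lemma matrix_neg_right: "(A::'a::ring_1^'n^'m) ** (- B) = - (A ** B)"
  by (simp add: matrix_matrix_mult_def vec_eq_iff sum_negf)
lemma mat_mult_left: "mat (c::'a::semiring_1) ** A = (\<chi> i j. c * A$i$j)"
  by (simp add: matrix_matrix_mult_def vec_eq_iff mat_def if_distrib[where f="\<lambda>x. x * _"] cong: if_cong)
lemma mat_mult_right: "A ** mat (c::'a::semiring_1) = (\<chi> i j. A$i$j * c)"
  by (simp add: matrix_matrix_mult_def vec_eq_iff mat_def if_distrib[where f="\<lambda>x. _ * x"] cong: if_cong)
lemma mat_comm: "mat (c::'a::comm_semiring_1) ** A = A ** mat c"
  by (simp add: mat_mult_left mat_mult_right mult.commute)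
lemma mat_comm_mid: "mat (c::'a::comm_semiring_1) ** (A ** B) = A ** (mat c ** B)"
  by (metis matrix_mul_assoc mat_comm)
lemma mat_0[simp]: "mat 0 = (0::'a::zero^'n^'n)"
  by (simp add: mat_def vec_eq_iff)
lemma mat_add: "mat (a + b) = (mat a + mat b :: 'a::monoid_add^'n^'n)"
  by (simp add: mat_def vec_eq_iff)
lemma mat_diff: "mat (a - b) = (mat a - mat b :: 'a::group_add^'n^'n)"
  by (simp add: mat_def vec_eq_iff)
lemma mat_neg: "mat (- a) = (- mat a :: 'a::group_add^'n^'n)"
  by (simp add: mat_def vec_eq_iff)
lemma mat_mult_mat: "mat a ** mat b = (mat (a * b) :: 'a::semiring_1^'n^'n)"
  by (simp add: mat_mult_left vec_eq_iff) (simp add: mat_def)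
lemma mat_mult_assoc_left: "mat (c::'a::comm_semiring_1) ** (A ** B) = (mat c ** A) ** B"
  by (simp add: matrix_mul_assoc)
lemma mat_of_real_mult: "mat (complex_of_real r) ** A = r *\<^sub>R A"
  by (simp add: mat_mult_left vec_eq_iff) (simp add: scaleR_conv_of_real)
lemma matrix_sum_left: "(A::'a::semiring_1^'n^'m) ** sum f S = sum (\<lambda>i. A ** f i) S"
  by (induct S rule: infinite_finite_induct) (auto simp: matrix_add_ldistrib)
lemma matrix_sum_right: "sum f S ** (A::'a::semiring_1^'n^'m) = sum (\<lambda>i. f i ** A) S"
  by (induct S rule: infinite_finite_induct) (auto simp: matrix_add_rdistrib)
lemma mat_vec: "mat c *v v = c *s (v::'a::semiring_1^'n)"
  by (simp add: matrix_vector_mult_def mat_def vec_eq_iff if_distrib[where f="\<lambda>x. x * _"] cong: if_cong)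
lemma transpose_diff: "transpose (A - B) = transpose A - transpose (B::'a::ab_group_add^'n^'m)"
  by (simp add: transpose_def vec_eq_iff)

section \<open>Conjugate transpose\<close>

lemma ctrans_mult: "ctrans (A ** B) = ctrans B ** ctrans A"
  by (simp add: ctrans_def matrix_matrix_mult_def transpose_def vec_eq_iff cnj_sum mult.commute)
lemma ctrans_ctrans[simp]: "ctrans (ctrans A) = A"
  by (simp add: ctrans_def transpose_def vec_eq_iff)
lemma ctrans_add: "ctrans (A + B) = ctrans A + ctrans B"
  by (simp add: ctrans_def transpose_def vec_eq_iff)
lemma ctrans_diff: "ctrans (A - B) = ctrans A - ctrans B"
  by (simp add: ctrans_def transpose_def vec_eq_iff)
lemma ctrans_neg: "ctrans (- A) = - ctrans A"
  by (simp add: ctrans_def transpose_def vec_eq_iff)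
lemma ctrans_0[simp]: "ctrans 0 = 0"
  by (simp add: ctrans_def transpose_def vec_eq_iff)
lemma ctrans_sum: "ctrans (sum f S) = sum (\<lambda>i. ctrans (f i)) S"
  by (induct S rule: infinite_finite_induct) (auto simp: ctrans_add)
lemma ctrans_mat: "ctrans (mat c) = mat (cnj c)"
  by (simp add: ctrans_def transpose_def mat_def vec_eq_iff)
lemma ctrans_cmat: "ctrans (cmat X) = cmat (transpose X)"
  by (simp add: ctrans_def transpose_def cmat_def vec_eq_iff)
lemma transpose_cmat: "transpose (cmat X) = cmat (transpose X)"
  by (simp add: transpose_def cmat_def vec_eq_iff)
lemma ctrans_scaleR: "ctrans (c *\<^sub>R A) = c *\<^sub>R ctrans A"
  by (simp add: ctrans_def transpose_def vec_eq_iff)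
lemma trace_ctrans: "trace (ctrans A) = cnj (trace A)"
  by (simp add: ctrans_def transpose_def trace_def cnj_sum)

section \<open>Eigenvalue conditions\<close>

definition chur :: "complex^'n^'n \<Rightarrow> bool" where
  "chur M \<longleftrightarrow> (\<forall>lam v. v \<noteq> 0 \<and> M *v v = lam *s v \<longrightarrow> Re lam < 0)"

lemma hurwitz_chur: "hurwitz A = chur (cmat A)"
  by (simp add: hurwitz_def chur_def)

lemma noninv_ker:
  fixes M :: "'a::field^'n^'n"
  assumes "\<not> invertible M" shows "\<exists>v. v \<noteq> 0 \<and> M *v v = 0"
  using assms unfolding invertible_left_inverse matrix_left_invertible_ker by blast

lemma chur_eig:
  assumes "chur M" "v \<noteq> 0" "M *v v = lam *s v" shows "Re lam < 0"
  using assms unfolding chur_def by blast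

lemma chur_inv:
  assumes "chur M" "\<not> Re s < 0" shows "invertible (mat s - M)"
proof (rule ccontr)
  assume "\<not> invertible (mat s - M)"
  then obtain v where v: "v \<noteq> 0" "(mat s - M) *v v = 0" using noninv_ker by blast
  then have "M *v v = s *s v" by (simp add: matrix_vector_mult_diff_rdistrib mat_vec)
  then show False using chur_eig[OF assms(1) v(1)] assms(2) by blast
qed

lemma chur_transpose:
  assumes "chur M" shows "chur (transpose M)"
  unfolding chur_def
proof (intro allI impI)
  fix lam v assume a: "v \<noteq> 0 \<and> transpose M *v v = lam *s v"
  then have "(transpose M - mat lam) *v v = 0"
    by (simp add: matrix_vector_mult_diff_rdistrib mat_vec)
  then have "\<not> invertible (transpose M - mat lam)"
    using a inj_matrix_vector_mult[of "transpose M - mat lam"]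
    by (metis injD matrix_vector_mult_0_right)
  then have "det (transpose M - mat lam) = 0" using invertible_det_nz by blast
  then have "det (M - mat lam) = 0"
    by (metis det_transpose transpose_diff transpose_mat)
  then have "\<not> invertible (M - mat lam)" using invertible_det_nz by blast
  then obtain u where u: "u \<noteq> 0" "(M - mat lam) *v u = 0" using noninv_ker by blast
  then have "M *v u = lam *s u" by (simp add: matrix_vector_mult_diff_rdistrib mat_vec)
  then show "Re lam < 0" using chur_eig[OF assms u(1)] by blast
qed


primrec mpow :: "'a::semiring_1^'n^'n \<Rightarrow> nat \<Rightarrow> 'a^'n^'n" where
  "mpow M 0 = mat 1" | "mpow M (Suc k) = M ** mpow M k"

definition peval :: "'a::comm_ring_1 poly \<Rightarrow> 'a^'n^'n \<Rightarrow> 'a^'n^'n" where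
  "peval p M = fold_coeffs (\<lambda>a X. mat a + M ** X) p 0"

lemma peval_0[simp]: "peval 0 M = 0"
  by (simp add: peval_def)

lemma peval_pCons[simp]: "peval (pCons a p) M = mat a + M ** peval p M"
  by (cases "p = 0 \<and> a = 0") (auto simp add: peval_def)

lemma peval_add: "peval (p + q) M = peval p M + peval q M"
  by (induct p q rule: poly_induct2) (simp_all add: mat_add matrix_add_ldistrib algebra_simps)

lemma peval_smult: "peval (smult c p) M = mat c ** peval p M"
  by (induct p rule: pCons_induct)
     (simp_all add: matrix_add_ldistrib mat_mult_mat mat_comm_mid)

lemma peval_minus: "peval (- p) M = - peval p M"
proof -
  have "peval (- p) M = peval (smult (-1) p) M" by simp
  also have "\<dots> = - peval p M" by (simp only: peval_smult mat_neg matrix_neg_left matrix_mul_lid)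
  finally show ?thesis .
qed

lemma peval_diff: "peval (p - q) M = peval p M - peval q M"
  using peval_add[of p "- q" M] by (simp add: peval_minus)

lemma peval_mult: "peval (p * q) M = peval p M ** peval q M"
  by (induct p rule: pCons_induct)
     (simp_all add: peval_add peval_smult matrix_add_rdistrib matrix_mul_assoc)

lemma peval_monom1: "peval (monom 1 n) M = mpow M n"
proof (induct n)
  case 0
  have "peval [:1::'a:] M = mat 1" by (simp only: peval_pCons peval_0 matrix_mul_0_right add_0_right)
  then show ?case by (simp only: monom_0 mpow.simps)
next
  case (Suc n) then show ?case by (simp add: monom_Suc)
qed

lemma peval_sum: "peval (sum f S) M = sum (\<lambda>i. peval (f i) M) S"
  by (induct S rule: infinite_finite_induct) (auto simp: peval_add)

lemma peval_intertwine:
  assumes "A ** X = X ** B" shows "peval p A ** X = X ** peval p B"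
proof (induct p rule: pCons_induct)
  case 0 then show ?case by simp
next
  case (pCons a p)
  have "peval (pCons a p) A ** X = mat a ** X + A ** (peval p A ** X)"
    by (simp add: matrix_add_rdistrib matrix_mul_assoc)
  also have "\<dots> = mat a ** X + (A ** X) ** peval p B"
    using pCons by (simp add: matrix_mul_assoc)
  also have "\<dots> = X ** peval (pCons a p) B"
    using assms by (simp add: matrix_add_ldistrib matrix_mul_assoc mat_comm[of a X])
  finally show ?case .
qed

lemma peval_lin: "peval [:-r, 1:] M = M - mat r"
  by (simp add: mat_neg)


lemma ex_annih:
  fixes B :: "complex^'k^'k"
  shows "\<exists>p. p \<noteq> 0 \<and> peval p B = 0"
proof (cases "inj_on (mpow B) {..DIM(complex^'k^'k)}")
  case True
  define D where "D = DIM(complex^'k^'k)"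
  define S where "S = mpow B ` {..D}"
  have fS: "finite S" unfolding S_def by simp
  have cS: "card S = D + 1" unfolding S_def using True by (simp add: card_image D_def)
  have "\<not> independent S"
    using independent_bound[of S] cS unfolding D_def by auto
  then obtain u where u: "\<exists>v\<in>S. u v \<noteq> 0" "(\<Sum>v\<in>S. u v *\<^sub>R v) = 0"
    using dependent_finite[OF fS] by blast
  define p where "p = (\<Sum>i\<le>D. smult (complex_of_real (u (mpow B i))) (monom 1 i))"
  have "peval p B = (\<Sum>i\<le>D. u (mpow B i) *\<^sub>R mpow B i)"
    unfolding p_def by (simp add: peval_sum peval_smult peval_monom1 mat_of_real_mult)
  also have "\<dots> = (\<Sum>v\<in>S. u v *\<^sub>R v)"
    unfolding S_def using True by (simp add: sum.reindex D_def)
  finally have e: "peval p B = 0" using u by simp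
  obtain i0 where i0: "i0 \<le> D" "u (mpow B i0) \<noteq> 0" using u(1) unfolding S_def by auto
  have "coeff p i0 = (\<Sum>i\<le>D. complex_of_real (u (mpow B i)) * (if i = i0 then 1 else 0))"
    unfolding p_def by (simp add: coeff_sum coeff_monom)
  also have "\<dots> = complex_of_real (u (mpow B i0))"
    using i0 by (simp add: if_distrib[where f="\<lambda>x. _ * x"] cong: if_cong)
  finally have "coeff p i0 \<noteq> 0" using i0 by simp
  then have "p \<noteq> 0" by auto
  with e show ?thesis by blast
next
  case False
  then obtain i j where ij: "i \<noteq> j" "mpow B i = mpow B j" unfolding inj_on_def by blast
  define p :: "complex poly" where "p = monom 1 i - monom 1 j"
  have "coeff p i = 1" using ij unfolding p_def by (simp add: coeff_monom)
  then have "p \<noteq> 0" by auto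
  moreover have "peval p B = 0" unfolding p_def using ij by (simp add: peval_diff peval_monom1)
  ultimately show ?thesis by blast
qed


lemma peval_invertible:
  fixes A :: "complex^'n^'n"
  assumes inv: "\<And>r. Re r < 0 \<Longrightarrow> invertible (A - mat r)"
  shows "q \<noteq> 0 \<Longrightarrow> (\<And>r. poly q r = 0 \<Longrightarrow> Re r < 0) \<Longrightarrow> invertible (peval q A)"
proof (induct "degree q" arbitrary: q rule: less_induct)
  case less
  show ?case
  proof (cases "degree q = 0")
    case True
    then obtain c where c: "q = [:c:]" by (metis degree_eq_zeroE)
    with less have "c \<noteq> 0" by auto
    have "mat c ** mat (1/c) = (mat 1 :: complex^'n^'n)" "mat (1/c) ** mat c = (mat 1 :: complex^'n^'n)"
      using \<open>c \<noteq> 0\<close> by (simp_all add: mat_mult_mat)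
    then have "invertible (mat c :: complex^'n^'n)" unfolding invertible_def by blast
    then show ?thesis using c by simp
  next
    case False
    then have "\<not> constant (poly q)" by (simp add: constant_degree)
    then obtain r where r: "poly q r = 0" using fundamental_theorem_of_algebra by blast
    then obtain q' where q': "q = [:-r, 1:] * q'" using poly_eq_0_iff_dvd by (metis dvdE)
    have "q' \<noteq> 0" using less.prems q' by auto
    have "degree q = degree [:-r, 1:] + degree q'"
      unfolding q' by (rule degree_mult_eq) (use \<open>q' \<noteq> 0\<close> in auto)
    then have dq: "degree q = 1 + degree q'" by simp
    have "invertible (peval q' A)"
    proof (rule less.hyps)
      show "degree q' < degree q" using dq by simp
      show "q' \<noteq> 0" by fact
      fix z assume "poly q' z = 0"
      then have "poly q z = 0" using q' by simp
      then show "Re z < 0" using less.prems by blast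
    qed
    moreover have "invertible (A - mat r)" using inv less.prems(2)[OF r] by blast
    ultimately have "invertible ((A - mat r) ** peval q' A)" using invertible_mult by blast
    moreover have "peval q A = peval [:-r, 1:] A ** peval q' A" unfolding q' by (rule peval_mult)
    ultimately show ?thesis by (simp only: peval_lin)
  qed
qed

lemma sylvester_unique:
  fixes A' :: "complex^'n^'n" and B' :: "complex^'k^'k" and X :: "complex^'k^'n"
  assumes cA: "chur A'" and cB: "chur B'" and eq: "A' ** X + X ** B' = 0"
  shows "X = 0"
proof -
  obtain p0 where "p0 \<noteq> 0 \<and> peval p0 B' = 0" using ex_annih by blast
  then obtain p where p: "p \<noteq> 0 \<and> peval p B' = 0"
    and pmin: "\<And>q. q \<noteq> 0 \<and> peval q B' = 0 \<Longrightarrow> degree p \<le> degree q"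
    using ex_has_least_nat[of "\<lambda>q. q \<noteq> 0 \<and> peval q B' = 0" p0 degree] by blast
  have roots: "Re r < 0" if r: "poly p r = 0" for r
  proof -
    obtain q where q: "p = [:-r, 1:] * q" using r poly_eq_0_iff_dvd by (metis dvdE)
    have "q \<noteq> 0" using p q by auto
    have "degree p = degree [:-r, 1:] + degree q"
      unfolding q by (rule degree_mult_eq) (use \<open>q \<noteq> 0\<close> in auto)
    then have "degree p = 1 + degree q" by simp
    then have "peval q B' \<noteq> 0" using pmin[of q] \<open>q \<noteq> 0\<close> by auto
    then obtain x where x: "peval q B' *v x \<noteq> 0"
      using matrix_eq[of "peval q B'" 0] by auto
    have "peval p B' = peval [:-r, 1:] B' ** peval q B'" unfolding q by (rule peval_mult)
    then have "(B' - mat r) ** peval q B' = 0" using p by (simp only: peval_lin)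
    then have "(B' - mat r) *v (peval q B' *v x) = 0"
      by (metis matrix_vector_mul_assoc matrix_vector_mult_0)
    then have "B' *v (peval q B' *v x) = r *s (peval q B' *v x)"
      by (simp add: matrix_vector_mult_diff_rdistrib mat_vec)
    then show ?thesis using chur_eig[OF cB x] by blast
  qed
  have invA: "invertible ((- A') - mat r)" if "Re r < 0" for r
  proof (rule ccontr)
    assume "\<not> invertible ((- A') - mat r)"
    then obtain v where v: "v \<noteq> 0" "((- A') - mat r) *v v = 0" using noninv_ker by blast
    then have "(- A') *v v = r *s v"
      by (simp add: matrix_vector_mult_diff_rdistrib mat_vec algebra_simps)
    moreover have "(- A') *v v = - (A' *v v)"
      by (simp add: matrix_vector_mult_def vec_eq_iff sum_negf)
    ultimately have "A' *v v = - (r *s v)" by (metis minus_minus)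
    then have "A' *v v = (- r) *s v" by (simp add: vec_eq_iff)
    then have "Re (- r) < 0" using chur_eig[OF cA v(1)] by blast
    with that show False by simp
  qed
  have inv: "invertible (peval p (- A'))"
    using peval_invertible[OF invA] p roots by blast
  have "(- A') ** X = X ** B'" using eq by (simp add: matrix_neg_left minus_equation_iff add_eq_0_iff2)
  then have "peval p (- A') ** X = X ** peval p B'" by (rule peval_intertwine)
  then have "peval p (- A') ** X = 0" using p by simp
  then obtain Q where "Q ** peval p (- A') = mat 1" using inv unfolding invertible_def by blast
  then have "X = Q ** (peval p (- A') ** X)" by (simp add: matrix_mul_assoc)
  then show ?thesis using \<open>peval p (- A') ** X = 0\<close> by simp
qed


abbreviation rv :: "real^'n^'n \<Rightarrow> real \<Rightarrow> complex^'n^'n" where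
  "rv A \<nu> \<equiv> resolvent A (\<i> * complex_of_real \<nu>)"

lemma matrix_inv_props:
  fixes X :: "'a::field^'n^'n" assumes "invertible X"
  shows "X ** matrix_inv X = mat 1" "matrix_inv X ** X = mat 1"
  using someI_ex[OF assms[unfolded invertible_def]] unfolding matrix_inv_def by blast+

lemma matrix_inv_unique:
  fixes X :: "'a::field^'n^'n" assumes "X ** Y = mat 1" shows "matrix_inv X = Y"
proof -
  have "Y ** X = mat 1" using assms matrix_left_right_inverse by blast
  then have inv: "invertible X" using assms unfolding invertible_def by blast
  have "matrix_inv X = matrix_inv X ** (X ** Y)" using assms by simp
  also have "\<dots> = Y" using matrix_inv_props(2)[OF inv] by (simp add: matrix_mul_assoc)
  finally show ?thesis .
qed

lemma rv_inv: "hurwitz A \<Longrightarrow> invertible (mat (\<i> * complex_of_real \<nu>) - cmat A)"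
  by (rule chur_inv) (auto simp: hurwitz_chur)

lemma rv_left: "hurwitz A \<Longrightarrow> (mat (\<i> * complex_of_real \<nu>) - cmat A) ** rv A \<nu> = mat 1"
  unfolding resolvent_def using matrix_inv_props(1)[OF rv_inv] by blast
lemma rv_right: "hurwitz A \<Longrightarrow> rv A \<nu> ** (mat (\<i> * complex_of_real \<nu>) - cmat A) = mat 1"
  unfolding resolvent_def using matrix_inv_props(2)[OF rv_inv] by blast

lemma A_rv: "hurwitz A \<Longrightarrow> cmat A ** rv A \<nu> = mat (\<i> * complex_of_real \<nu>) ** rv A \<nu> - mat 1"
  using rv_left[of A \<nu>] by (simp add: matrix_diff_rdistrib algebra_simps)
lemma rv_A: "hurwitz A \<Longrightarrow> rv A \<nu> ** cmat A = mat (\<i> * complex_of_real \<nu>) ** rv A \<nu> - mat 1"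
  using rv_right[of A \<nu>] by (simp add: matrix_diff_ldistrib algebra_simps mat_comm)

lemma matrix_inv_cramer:
  fixes X :: "complex^'n^'n" assumes "invertible X"
  shows "matrix_inv X = (\<chi> i j. det (\<chi> a b. if b = i then (if a = j then 1 else 0) else X$a$b) / det X)"
proof -
  have d: "det X \<noteq> 0" using assms invertible_det_nz by blast
  have XR: "X ** matrix_inv X = mat 1" by (rule matrix_inv_props(1)[OF assms])
  show ?thesis
  proof (subst vec_eq_iff, intro allI, subst vec_eq_iff, intro allI)
    fix i j
    let ?x = "(\<chi> a. matrix_inv X $ a $ j)"
    let ?b = "(\<chi> a. if a = j then 1 else (0::complex))"
    have "X *v ?x = (\<chi> a. (X ** matrix_inv X) $ a $ j)"
      by (simp add: matrix_vector_mult_def matrix_matrix_mult_def)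
    also have "\<dots> = ?b" using XR by (simp add: mat_def)
    finally have "X *v ?x = ?b" .
    then have "?x = (\<chi> k. det(\<chi> a b. if b=k then ?b$a else X$a$b) / det X)"
      using cramer[OF d] by blast
    then have "?x $ i = (\<chi> k. det(\<chi> a b. if b=k then ?b$a else X$a$b) / det X) $ i" by simp
    moreover have "(\<chi> a b. if b = i then ?b$a else X$a$b) = (\<chi> a b. if b = i then (if a = j then 1 else 0) else X$a$b)"
      by (simp add: vec_eq_iff)
    ultimately show "matrix_inv X $ i $ j = (\<chi> i j. det (\<chi> a b. if b = i then (if a = j then 1 else 0) else X$a$b) / det X) $ i $ j"
      by simp
  qed
qed

lemma continuous_on_det:
  fixes f :: "'a::topological_space \<Rightarrow> complex^'n^'n"
  assumes "\<And>i j. continuous_on S (\<lambda>t. f t $ i $ j)"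
  shows "continuous_on S (\<lambda>t. det (f t))"
  unfolding det_def by (intro continuous_intros assms)

lemma rv_cont_UNIV: assumes "hurwitz A" shows "continuous_on UNIV (rv A)"
proof -
  let ?N = "\<lambda>\<nu>. mat (\<i> * complex_of_real \<nu>) - cmat A"
  have eq: "rv A \<nu> = (\<chi> i j. det (\<chi> a b. if b = i then (if a = j then 1 else 0) else ?N \<nu>$a$b) / det (?N \<nu>))" for \<nu>
    unfolding resolvent_def using matrix_inv_cramer[OF rv_inv[OF assms]] by simp
  have nz: "det (?N \<nu>) \<noteq> 0" for \<nu> using rv_inv[OF assms] invertible_det_nz by blast
  have ce: "continuous_on UNIV (\<lambda>\<nu>. ?N \<nu> $ a $ b)" for a b
    by (cases "a = b") (simp_all add: mat_def cmat_def continuous_intros)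
  have ce2: "continuous_on UNIV (\<lambda>\<nu>. (\<chi> a b. if b = i then (if a = j then 1 else 0) else ?N \<nu>$a$b) $ a $ b)" for i j a b
    using ce by (cases "b = i") simp_all
  show ?thesis
    unfolding eq
    by (intro continuous_on_vec_lambda continuous_on_divide continuous_on_det ce ce2) (simp add: nz)
qed

lemma rv_cont[continuous_intros]:
  "hurwitz A \<Longrightarrow> continuous_on S f \<Longrightarrow> continuous_on S (\<lambda>x. rv A (f x))"
  using continuous_on_compose2[OF rv_cont_UNIV] by blast

lemma continuous_on_matmul[continuous_intros]:
  fixes f :: "'a::topological_space \<Rightarrow> complex^'k^'m" and g :: "'a \<Rightarrow> complex^'n^'k"
  assumes "continuous_on S f" "continuous_on S g"
  shows "continuous_on S (\<lambda>x. f x ** g x)"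
  unfolding matrix_matrix_mult_def
  by (intro continuous_on_vec_lambda continuous_on_sum continuous_on_mult continuous_on_component assms)

lemma continuous_on_ctrans[continuous_intros]:
  fixes f :: "'a::topological_space \<Rightarrow> complex^'k^'m"
  shows "continuous_on S f \<Longrightarrow> continuous_on S (\<lambda>x. ctrans (f x))"
  unfolding ctrans_def transpose_def map_matrix_def
  by (simp, intro continuous_on_vec_lambda continuous_on_cnj continuous_on_component)

lemma continuous_on_cnjm[continuous_intros]:
  fixes f :: "'a::topological_space \<Rightarrow> complex^'k^'m"
  shows "continuous_on S f \<Longrightarrow> continuous_on S (\<lambda>x. map_matrix cnj (f x))"
  unfolding map_matrix_def
  by (intro continuous_on_vec_lambda continuous_on_cnj continuous_on_component)

lemma continuous_on_trace[continuous_intros]: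
  fixes f :: "'a::topological_space \<Rightarrow> complex^'k^'k"
  shows "continuous_on S f \<Longrightarrow> continuous_on S (\<lambda>x. trace (f x))"
  unfolding trace_def by (intro continuous_intros)

lemma bl_lmul: "bounded_linear (\<lambda>X. (L::complex^'k^'m) ** (X::complex^'n^'k))"
  unfolding linear_conv_bounded_linear[symmetric]
  by (rule linearI) (simp_all add: matrix_add_ldistrib matrix_scalar_ac scalar_matrix_assoc)
lemma bl_rmul: "bounded_linear (\<lambda>X. (X::complex^'k^'m) ** (R::complex^'n^'k))"
  unfolding linear_conv_bounded_linear[symmetric]
  by (rule linearI) (simp_all add: matrix_add_rdistrib scalar_matrix_assoc)
lemma bl_ctrans: "bounded_linear (ctrans :: complex^'k^'m \<Rightarrow> _)"
  unfolding linear_conv_bounded_linear[symmetric]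
  by (rule linearI) (simp_all add: ctrans_add ctrans_scaleR)
lemma trace_scaleR: "trace (c *\<^sub>R (X::complex^'k^'k)) = c *\<^sub>R trace X"
  by (simp add: trace_def scaleR_sum_right)
lemma bl_trace: "bounded_linear (trace :: complex^'k^'k \<Rightarrow> complex)"
  unfolding linear_conv_bounded_linear[symmetric]
  by (rule linearI) (simp_all add: trace_add trace_scaleR)
lemma bl_cnjm: "bounded_linear (map_matrix cnj :: complex^'k^'m \<Rightarrow> _)"
  unfolding linear_conv_bounded_linear[symmetric]
  by (rule linearI) (simp_all add: vec_eq_iff)

lemma integral_lmul: "f integrable_on S \<Longrightarrow> integral S (\<lambda>x. (L::complex^'k^'m) ** (f x::complex^'n^'k)) = L ** integral S f"
  using integral_linear[OF _ bl_lmul, of f S L] by (simp add: o_def)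
lemma integral_rmul: "f integrable_on S \<Longrightarrow> integral S (\<lambda>x. (f x::complex^'k^'m) ** (R::complex^'n^'k)) = integral S f ** R"
  using integral_linear[OF _ bl_rmul, of f S R] by (simp add: o_def)
lemma integral_ctrans: "f integrable_on S \<Longrightarrow> integral S (\<lambda>x. ctrans (f x::complex^'k^'m)) = ctrans (integral S f)"
  using integral_linear[OF _ bl_ctrans, of f S] by (simp add: o_def)
lemma integral_trace: "f integrable_on S \<Longrightarrow> integral S (\<lambda>x. trace (f x::complex^'k^'k)) = trace (integral S f)"
  using integral_linear[OF _ bl_trace, of f S] by (simp add: o_def)
lemma integral_cnjm: "f integrable_on S \<Longrightarrow> integral S (\<lambda>x. map_matrix cnj (f x::complex^'k^'m)) = map_matrix cnj (integral S f)"
  using integral_linear[OF _ bl_cnjm, of f S] by (simp add: o_def)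

lemma cont_integrable: "continuous_on UNIV f \<Longrightarrow> (f::real \<Rightarrow> 'a::banach) integrable_on {a..b}"
  by (rule integrable_continuous_real) (rule continuous_on_subset, auto)


definition smat :: "complex \<Rightarrow> complex^'n^'m \<Rightarrow> complex^'n^'m" where
  "smat c Q = (\<chi> i j. c * Q$i$j)"

lemma mat_smat_l: "mat c ** Q = smat c Q"
  by (simp add: mat_mult_left smat_def)
lemma mat_smat_r: "Q ** mat c = smat c Q"
  by (simp add: mat_mult_right smat_def vec_eq_iff mult.commute)
lemma smat_mult_l: "smat c A ** B = smat c (A ** B)"
  by (simp add: smat_def matrix_matrix_mult_def vec_eq_iff sum_distrib_left mult.assoc)
lemma smat_mult_r: "A ** smat c B = smat c (A ** B)"
  by (simp add: smat_def matrix_matrix_mult_def vec_eq_iff sum_distrib_left mult.left_commute)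
lemma smat_add: "smat a Q + smat b Q = smat (a + b) Q"
  by (simp add: smat_def vec_eq_iff distrib_right)
lemma smat_0: "smat 0 Q = 0"
  by (simp add: smat_def vec_eq_iff)
lemma ctrans_smat: "ctrans (smat c Q) = smat (cnj c) (ctrans Q)"
  by (simp add: smat_def ctrans_def transpose_def vec_eq_iff)

definition Yf :: "real \<Rightarrow> real^'n^'n \<Rightarrow> real^'k^'k \<Rightarrow> complex^'k^'n \<Rightarrow> complex^'k^'n" where
  "Yf w A Ak X = (1/(2*pi)) *\<^sub>R integral {-w..w} (\<lambda>\<nu>. ctrans (rv A \<nu>) ** X ** rv Ak \<nu>)"
definition Pf :: "real \<Rightarrow> real^'n^'n \<Rightarrow> real^'k^'k \<Rightarrow> complex^'k^'n \<Rightarrow> complex^'k^'n" where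
  "Pf w A Ak X = (1/(2*pi)) *\<^sub>R integral {-w..w} (\<lambda>\<nu>. rv A \<nu> ** X ** ctrans (rv Ak \<nu>))"

lemma Y_point:
  assumes hA: "hurwitz A" and hK: "hurwitz Ak"
  shows "transpose (cmat A) ** (ctrans (rv A \<nu>) ** X ** rv Ak \<nu>) + (ctrans (rv A \<nu>) ** X ** rv Ak \<nu>) ** cmat Ak
       = - (X ** rv Ak \<nu>) - ctrans (rv A \<nu>) ** X"
proof -
  let ?s = "\<i> * complex_of_real \<nu>"
  let ?R = "rv A \<nu>" let ?K = "rv Ak \<nu>"
  let ?Q = "ctrans ?R ** X ** ?K"
  have "ctrans (?R ** cmat A) = ctrans (mat ?s ** ?R - mat 1)" using rv_A[OF hA] by simp
  then have a: "transpose (cmat A) ** ctrans ?R = smat (cnj ?s) (ctrans ?R) - mat 1"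
    by (simp add: ctrans_mult ctrans_diff ctrans_cmat transpose_cmat ctrans_mat mat_smat_r)
  have b: "?K ** cmat Ak = smat ?s ?K - mat 1" using rv_A[OF hK] by (simp add: mat_smat_l)
  have "transpose (cmat A) ** ?Q + ?Q ** cmat Ak
      = (transpose (cmat A) ** ctrans ?R) ** X ** ?K + ctrans ?R ** X ** (?K ** cmat Ak)"
    by (simp add: matrix_mul_assoc)
  also have "\<dots> = (smat (cnj ?s) (ctrans ?R) - mat 1) ** X ** ?K + ctrans ?R ** X ** (smat ?s ?K - mat 1)"
    using a b by simp
  also have "\<dots> = (smat (cnj ?s) ?Q + smat ?s ?Q) - X ** ?K - ctrans ?R ** X"
    by (simp add: matrix_diff_rdistrib matrix_diff_ldistrib smat_mult_l smat_mult_r matrix_mul_assoc algebra_simps)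
  also have "\<dots> = - (X ** ?K) - ctrans ?R ** X"
    by (simp add: smat_add smat_0)
  finally show ?thesis .
qed

lemma P_point:
  assumes hA: "hurwitz A" and hK: "hurwitz Ak"
  shows "cmat A ** (rv A \<nu> ** X ** ctrans (rv Ak \<nu>)) + (rv A \<nu> ** X ** ctrans (rv Ak \<nu>)) ** transpose (cmat Ak)
       = - (X ** ctrans (rv Ak \<nu>)) - rv A \<nu> ** X"
proof -
  let ?s = "\<i> * complex_of_real \<nu>"
  let ?R = "rv A \<nu>" let ?K = "rv Ak \<nu>"
  let ?Q = "?R ** X ** ctrans ?K"
  have a: "cmat A ** ?R = smat ?s ?R - mat 1" using A_rv[OF hA] by (simp add: mat_smat_l)
  have "ctrans (cmat Ak ** ?K) = ctrans (mat ?s ** ?K - mat 1)" using A_rv[OF hK] by simp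
  then have b: "ctrans ?K ** transpose (cmat Ak) = smat (cnj ?s) (ctrans ?K) - mat 1"
    by (simp add: ctrans_mult ctrans_diff ctrans_cmat transpose_cmat ctrans_mat mat_smat_r)
  have "cmat A ** ?Q + ?Q ** transpose (cmat Ak)
      = (cmat A ** ?R) ** X ** ctrans ?K + ?R ** X ** (ctrans ?K ** transpose (cmat Ak))"
    by (simp add: matrix_mul_assoc)
  also have "\<dots> = (smat ?s ?R - mat 1) ** X ** ctrans ?K + ?R ** X ** (smat (cnj ?s) (ctrans ?K) - mat 1)"
    using a b by simp
  also have "\<dots> = (smat (cnj ?s) ?Q + smat ?s ?Q) - X ** ctrans ?K - ?R ** X"
    by (simp add: matrix_diff_rdistrib matrix_diff_ldistrib smat_mult_l smat_mult_r matrix_mul_assoc algebra_simps)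
  also have "\<dots> = - (X ** ctrans ?K) - ?R ** X"
    by (simp add: smat_add smat_0)
  finally show ?thesis .
qed


lemma Y_eq:
  assumes hA: "hurwitz A" and hK: "hurwitz Ak"
  shows "transpose (cmat A) ** Yf w A Ak X + Yf w A Ak X ** cmat Ak + ctrans (Fw w A) ** X + X ** Fw w Ak = 0"
proof -
  define f where "f \<nu> = ctrans (rv A \<nu>) ** X ** rv Ak \<nu>" for \<nu>
  let ?S = "{-w..w}"
  have cf: "continuous_on UNIV f" unfolding f_def by (intro continuous_intros) (simp_all add: hA hK)
  have i1: "f integrable_on ?S" by (rule cont_integrable[OF cf])
  have i2: "(\<lambda>\<nu>. transpose (cmat A) ** f \<nu>) integrable_on ?S" 
    by (rule cont_integrable) (intro continuous_intros cf)
  have i3: "(\<lambda>\<nu>. f \<nu> ** cmat Ak) integrable_on ?S" 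
    by (rule cont_integrable) (intro continuous_intros cf)
  have iA: "rv A integrable_on ?S" by (rule cont_integrable) (intro continuous_intros, simp_all add: hA)
  have iK: "rv Ak integrable_on ?S" by (rule cont_integrable) (intro continuous_intros, simp_all add: hK)
  have i4: "(\<lambda>\<nu>. - (X ** rv Ak \<nu>)) integrable_on ?S"
    by (rule cont_integrable) (intro continuous_intros, simp_all add: hK)
  have i5: "(\<lambda>\<nu>. ctrans (rv A \<nu>) ** X) integrable_on ?S"
    by (rule cont_integrable) (intro continuous_intros, simp_all add: hA)
  have i6: "(\<lambda>\<nu>. ctrans (rv A \<nu>)) integrable_on ?S"
    by (rule cont_integrable) (intro continuous_intros, simp_all add: hA)
  have "transpose (cmat A) ** integral ?S f + integral ?S f ** cmat Ak
      = integral ?S (\<lambda>\<nu>. transpose (cmat A) ** f \<nu> + f \<nu> ** cmat Ak)"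
    using i1 i2 i3 by (simp add: integral_add integral_lmul integral_rmul)
  also have "\<dots> = integral ?S (\<lambda>\<nu>. - (X ** rv Ak \<nu>) - ctrans (rv A \<nu>) ** X)"
    unfolding f_def using Y_point[OF hA hK] by simp
  also have "\<dots> = - (X ** integral ?S (rv Ak)) - ctrans (integral ?S (rv A)) ** X"
    using i4 i5 iA iK i6 by (simp add: integral_diff integral_lmul integral_rmul integral_ctrans)
  finally have main: "transpose (cmat A) ** integral ?S f + integral ?S f ** cmat Ak
       + ctrans (integral ?S (rv A)) ** X + X ** integral ?S (rv Ak) = 0"
    by (simp add: algebra_simps)
  have "transpose (cmat A) ** Yf w A Ak X + Yf w A Ak X ** cmat Ak + ctrans (Fw w A) ** X + X ** Fw w Ak
     = (1/(2*pi)) *\<^sub>R (transpose (cmat A) ** integral ?S f + integral ?S f ** cmat Ak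
       + ctrans (integral ?S (rv A)) ** X + X ** integral ?S (rv Ak))"
    unfolding Yf_def Fw_def f_def
    by (simp add: matrix_scalar_ac scalar_matrix_assoc ctrans_scaleR scaleR_right_distrib)
  then show ?thesis using main by simp
qed

lemma P_eq:
  assumes hA: "hurwitz A" and hK: "hurwitz Ak"
  shows "cmat A ** Pf w A Ak X + Pf w A Ak X ** transpose (cmat Ak) + Fw w A ** X + X ** ctrans (Fw w Ak) = 0"
proof -
  define f where "f \<nu> = rv A \<nu> ** X ** ctrans (rv Ak \<nu>)" for \<nu>
  let ?S = "{-w..w}"
  have cf: "continuous_on UNIV f" unfolding f_def by (intro continuous_intros) (simp_all add: hA hK)
  have i1: "f integrable_on ?S" by (rule cont_integrable[OF cf])
  have i2: "(\<lambda>\<nu>. cmat A ** f \<nu>) integrable_on ?S" 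
    by (rule cont_integrable) (intro continuous_intros cf)
  have i3: "(\<lambda>\<nu>. f \<nu> ** transpose (cmat Ak)) integrable_on ?S" 
    by (rule cont_integrable) (intro continuous_intros cf)
  have iA: "rv A integrable_on ?S" by (rule cont_integrable) (intro continuous_intros, simp_all add: hA)
  have iK: "rv Ak integrable_on ?S" by (rule cont_integrable) (intro continuous_intros, simp_all add: hK)
  have i4: "(\<lambda>\<nu>. - (X ** ctrans (rv Ak \<nu>))) integrable_on ?S"
    by (rule cont_integrable) (intro continuous_intros, simp_all add: hK)
  have i5: "(\<lambda>\<nu>. rv A \<nu> ** X) integrable_on ?S"
    by (rule cont_integrable) (intro continuous_intros, simp_all add: hA)
  have i6: "(\<lambda>\<nu>. ctrans (rv Ak \<nu>)) integrable_on ?S"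
    by (rule cont_integrable) (intro continuous_intros, simp_all add: hK)
  have "cmat A ** integral ?S f + integral ?S f ** transpose (cmat Ak)
      = integral ?S (\<lambda>\<nu>. cmat A ** f \<nu> + f \<nu> ** transpose (cmat Ak))"
    using i1 i2 i3 by (simp add: integral_add integral_lmul integral_rmul)
  also have "\<dots> = integral ?S (\<lambda>\<nu>. - (X ** ctrans (rv Ak \<nu>)) - rv A \<nu> ** X)"
    unfolding f_def using P_point[OF hA hK] by simp
  also have "\<dots> = - (X ** ctrans (integral ?S (rv Ak))) - integral ?S (rv A) ** X"
    using i4 i5 iA iK i6 by (simp add: integral_diff integral_lmul integral_rmul integral_ctrans)
  finally have main: "cmat A ** integral ?S f + integral ?S f ** transpose (cmat Ak)
       + integral ?S (rv A) ** X + X ** ctrans (integral ?S (rv Ak)) = 0"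
    by (simp add: algebra_simps)
  have "cmat A ** Pf w A Ak X + Pf w A Ak X ** transpose (cmat Ak) + Fw w A ** X + X ** ctrans (Fw w Ak)
     = (1/(2*pi)) *\<^sub>R (cmat A ** integral ?S f + integral ?S f ** transpose (cmat Ak)
       + integral ?S (rv A) ** X + X ** ctrans (integral ?S (rv Ak)))"
    unfolding Pf_def Fw_def f_def
    by (simp add: matrix_scalar_ac scalar_matrix_assoc ctrans_scaleR scaleR_right_distrib)
  then show ?thesis using main by simp
qed

lemma Yf_add:
  assumes hA: "hurwitz A" and hK: "hurwitz Ak"
  shows "Yf w A Ak (X + X') = Yf w A Ak X + Yf w A Ak X'"
proof -
  have i: "(\<lambda>\<nu>. ctrans (rv A \<nu>) ** Z ** rv Ak \<nu>) integrable_on {-w..w}" for Z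
    by (rule cont_integrable) (intro continuous_intros, simp_all add: hA hK)
  show ?thesis unfolding Yf_def
    using i[of X] i[of X']
    by (simp add: matrix_add_ldistrib matrix_add_rdistrib integral_add scaleR_right_distrib)
qed

lemma Yf_scaleR: "Yf w A Ak (c *\<^sub>R X) = c *\<^sub>R Yf w A Ak X"
proof -
  have "(\<lambda>\<nu>. ctrans (rv A \<nu>) ** (c *\<^sub>R X) ** rv Ak \<nu>) = (\<lambda>\<nu>. c *\<^sub>R (ctrans (rv A \<nu>) ** X ** rv Ak \<nu>))"
    by (simp add: matrix_scalar_ac scalar_matrix_assoc)
  then show ?thesis unfolding Yf_def by (simp only: integral_cmul scaleR_scaleR mult.commute)
qed

lemma bl_Yf: "hurwitz A \<Longrightarrow> hurwitz Ak \<Longrightarrow> bounded_linear (Yf w A Ak)"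
  unfolding linear_conv_bounded_linear[symmetric]
  by (rule linearI) (simp_all add: Yf_add Yf_scaleR)

definition Phi :: "('p::finite \<Rightarrow> real^'n^'n) \<Rightarrow> ('p \<Rightarrow> real^'k^'k) \<Rightarrow> complex^'k^'n \<Rightarrow> complex^'k^'n" where
  "Phi M Mk X = (\<Sum>i\<in>UNIV. cmat (M i) ** X ** cmat (Mk i))"

lemma bl_Phi: "bounded_linear (Phi M Mk)"
  unfolding linear_conv_bounded_linear[symmetric]
  by (rule linearI) (simp_all add: Phi_def matrix_add_ldistrib matrix_add_rdistrib sum.distrib
      scaleR_sum_right matrix_scalar_ac scalar_matrix_assoc)


lemma T1_point:
  "ctrans (tf1 A B C s) ** tf1 Ak Bk Ck s
   = transpose (cmat B) ** (ctrans (resolvent A s) ** (transpose (cmat C) ** cmat Ck) ** resolvent Ak s) ** cmat Bk"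
  unfolding tf1_def by (simp add: ctrans_mult ctrans_cmat transpose_cmat matrix_mul_assoc)

lemma T2_point:
  assumes symM: "\<And>i. transpose (M i) = M i"
  shows "(\<Sum>i\<in>UNIV. ctrans (tf2 A B M i s1 s2) ** tf2 Ak Bk Mk i s1 s2)
   = transpose (cmat B) ** (ctrans (resolvent A s2) **
       Phi M Mk (resolvent A s1 ** (cmat B ** transpose (cmat Bk)) ** ctrans (resolvent Ak s1))
       ** resolvent Ak s2) ** cmat Bk"
  unfolding Phi_def tf2_def
  by (simp add: matrix_sum_left matrix_sum_right matrix_mul_assoc ctrans_mult ctrans_cmat transpose_cmat symM)

lemma lin_aux:
  assumes "a + b + c + d = 0" "a' + b' + c + d = 0" shows "(a - a') + (b - b') = (0::'a::ab_group_add)"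
proof -
  have "(a - a') + (b - b') = (a + b + c + d) - (a' + b' + c + d)" by (simp add: algebra_simps)
  then show ?thesis using assms by simp
qed

lemma inner_formula:
  fixes A :: "real^'n^'n" and B :: "real^'m^'n" and C :: "real^'n^'p"
    and M :: "'p \<Rightarrow> real^'n^'n"
    and Ak :: "real^'k^'k" and Bk :: "real^'m^'k" and Ck :: "real^'k^'p"
    and Mk :: "'p \<Rightarrow> real^'k^'k"
    and w :: real
    and P12 Y12 Z12 :: "complex^'k^'n"
  assumes hA: "hurwitz A" and hAk: "hurwitz Ak"
    and symM: "\<And>i. transpose (M i) = M i"
    and symMk: "\<And>i. transpose (Mk i) = Mk i"
    and P12: "cmat A ** P12 + P12 ** transpose (cmat Ak)
              + Fw w A ** cmat B ** transpose (cmat Bk)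
              + cmat B ** transpose (cmat Bk) ** ctrans (Fw w Ak) = 0"
    and Y12: "transpose (cmat A) ** Y12 + Y12 ** cmat Ak
              + ctrans (Fw w A) ** transpose (cmat C) ** cmat Ck
              + transpose (cmat C) ** cmat Ck ** Fw w Ak = 0"
    and Z12: "transpose (cmat A) ** Z12 + Z12 ** cmat Ak
              + (\<Sum>i\<in>UNIV. ctrans (Fw w A) ** cmat (M i) ** P12 ** cmat (Mk i)
                           + cmat (M i) ** P12 ** cmat (Mk i) ** Fw w Ak) = 0"
  shows "h2w_inner w (tf1 A B C) (tf2 A B M) (tf1 Ak Bk Ck) (tf2 Ak Bk Mk)
           = trace (transpose (cmat B) ** (Y12 + Z12) ** cmat Bk)"
proof -
  let ?S = "{-w..w}"
  let ?L = "transpose (cmat B)" and ?Rr = "cmat Bk"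
  let ?Xc = "transpose (cmat C) ** cmat Ck"
  let ?XB = "cmat B ** transpose (cmat Bk)"
  have cA: "chur (cmat A)" and cK: "chur (cmat Ak)" using hA hAk by (simp_all add: hurwitz_chur)
  have cAt: "chur (transpose (cmat A))" and cKt: "chur (transpose (cmat Ak))"
    using chur_transpose cA cK by blast+
  \<comment> \<open>Uniqueness of Y\<close>
  have Yeq: "Yf w A Ak ?Xc = Y12"
  proof -
    have Y12': "transpose (cmat A) ** Y12 + Y12 ** cmat Ak + ctrans (Fw w A) ** ?Xc + ?Xc ** Fw w Ak = 0"
      using Y12 by (simp add: matrix_mul_assoc)
    have "transpose (cmat A) ** (Yf w A Ak ?Xc - Y12) + (Yf w A Ak ?Xc - Y12) ** cmat Ak = 0"
      unfolding matrix_diff_ldistrib matrix_diff_rdistrib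
      by (rule lin_aux[OF Y_eq[OF hA hAk, of w ?Xc] Y12'])
    then have "Yf w A Ak ?Xc - Y12 = 0" by (rule sylvester_unique[OF cAt cK])
    then show ?thesis by simp
  qed
  have Peq: "Pf w A Ak ?XB = P12"
  proof -
    have P12': "cmat A ** P12 + P12 ** transpose (cmat Ak) + Fw w A ** ?XB + ?XB ** ctrans (Fw w Ak) = 0"
      using P12 by (simp add: matrix_mul_assoc)
    have "cmat A ** (Pf w A Ak ?XB - P12) + (Pf w A Ak ?XB - P12) ** transpose (cmat Ak) = 0"
      unfolding matrix_diff_ldistrib matrix_diff_rdistrib
      by (rule lin_aux[OF P_eq[OF hA hAk, of w ?XB] P12'])
    then have "Pf w A Ak ?XB - P12 = 0" by (rule sylvester_unique[OF cA cKt])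
    then show ?thesis by simp
  qed
  have Zeq: "Yf w A Ak (Phi M Mk P12) = Z12"
  proof -
    have sumeq: "(\<Sum>i\<in>UNIV. ctrans (Fw w A) ** cmat (M i) ** P12 ** cmat (Mk i)
                           + cmat (M i) ** P12 ** cmat (Mk i) ** Fw w Ak)
        = ctrans (Fw w A) ** Phi M Mk P12 + Phi M Mk P12 ** Fw w Ak"
      unfolding Phi_def by (simp add: sum.distrib matrix_sum_left matrix_sum_right matrix_mul_assoc)
    have Z12': "transpose (cmat A) ** Z12 + Z12 ** cmat Ak + ctrans (Fw w A) ** Phi M Mk P12 + Phi M Mk P12 ** Fw w Ak = 0"
      using Z12 unfolding sumeq by (simp add: add.assoc)
    have "transpose (cmat A) ** (Yf w A Ak (Phi M Mk P12) - Z12) + (Yf w A Ak (Phi M Mk P12) - Z12) ** cmat Ak = 0"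
      unfolding matrix_diff_ldistrib matrix_diff_rdistrib
      by (rule lin_aux[OF Y_eq[OF hA hAk, of w "Phi M Mk P12"] Z12'])
    then have "Yf w A Ak (Phi M Mk P12) - Z12 = 0" by (rule sylvester_unique[OF cAt cK])
    then show ?thesis by simp
  qed
  define f where "f \<nu> = ctrans (rv A \<nu>) ** ?Xc ** rv Ak \<nu>" for \<nu>
  have cf: "continuous_on UNIV f" unfolding f_def by (intro continuous_intros) (simp_all add: hA hAk)
  have if1: "f integrable_on ?S" by (rule cont_integrable[OF cf])
  have if2: "(\<lambda>\<nu>. ?L ** f \<nu>) integrable_on ?S" by (rule cont_integrable) (intro continuous_intros cf)
  have if3: "(\<lambda>\<nu>. ?L ** f \<nu> ** ?Rr) integrable_on ?S" by (rule cont_integrable) (intro continuous_intros cf)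
  have lin: "integral ?S (\<lambda>\<nu>. trace (ctrans (tf1 A B C (\<i> * complex_of_real \<nu>)) ** tf1 Ak Bk Ck (\<i> * complex_of_real \<nu>)))
      = trace (?L ** integral ?S f ** ?Rr)"
  proof -
    have "integral ?S (\<lambda>\<nu>. trace (ctrans (tf1 A B C (\<i> * complex_of_real \<nu>)) ** tf1 Ak Bk Ck (\<i> * complex_of_real \<nu>)))
        = integral ?S (\<lambda>\<nu>. trace (?L ** f \<nu> ** ?Rr))"
      unfolding T1_point f_def by simp
    also have "\<dots> = trace (integral ?S (\<lambda>\<nu>. ?L ** f \<nu> ** ?Rr))" using if3 by (rule integral_trace)
    also have "\<dots> = trace (?L ** integral ?S f ** ?Rr)" using if1 if2 by (simp add: integral_lmul integral_rmul)
    finally show ?thesis .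
  qed
  have lin2: "complex_of_real (1 / (2 * pi)) * trace (?L ** integral ?S f ** ?Rr) = trace (?L ** Y12 ** ?Rr)"
  proof -
    have "?L ** Yf w A Ak ?Xc ** ?Rr = (1 / (2 * pi)) *\<^sub>R (?L ** integral ?S f ** ?Rr)"
      unfolding Yf_def f_def by (simp add: matrix_scalar_ac scalar_matrix_assoc)
    then have "trace (?L ** Yf w A Ak ?Xc ** ?Rr) = (1 / (2 * pi)) *\<^sub>R trace (?L ** integral ?S f ** ?Rr)"
      by (simp only: trace_scaleR)
    then show ?thesis unfolding Yeq by (simp only: scaleR_conv_of_real)
  qed
  define XP where "XP \<nu> = rv A \<nu> ** ?XB ** ctrans (rv Ak \<nu>)" for \<nu>
  define h where "h X = ?L ** Yf w A Ak (Phi M Mk X) ** ?Rr" for X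
  have blh: "bounded_linear h" unfolding h_def
    by (intro bounded_linear_compose[OF bl_rmul] bounded_linear_compose[OF bl_lmul]
        bounded_linear_compose[OF bl_Yf[OF hA hAk]] bl_Phi)
  have cXP: "continuous_on UNIV XP" unfolding XP_def by (intro continuous_intros) (simp_all add: hA hAk)
  have iXP: "XP integrable_on ?S" by (rule cont_integrable[OF cXP])
  have pi0: "pi \<noteq> 0" by simp
  have inner: "integral ?S (\<lambda>\<nu>2. \<Sum>i\<in>UNIV. ctrans (tf2 A B M i (\<i> * complex_of_real \<nu>1) (\<i> * complex_of_real \<nu>2))
                  ** tf2 Ak Bk Mk i (\<i> * complex_of_real \<nu>1) (\<i> * complex_of_real \<nu>2))
      = (2 * pi) *\<^sub>R h (XP \<nu>1)" for \<nu>1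
  proof -
    define g where "g \<nu>2 = ctrans (rv A \<nu>2) ** Phi M Mk (XP \<nu>1) ** rv Ak \<nu>2" for \<nu>2
    have cg: "continuous_on UNIV g" unfolding g_def by (intro continuous_intros) (simp_all add: hA hAk)
    have ig1: "g integrable_on ?S" by (rule cont_integrable[OF cg])
    have ig2: "(\<lambda>\<nu>. ?L ** g \<nu>) integrable_on ?S" by (rule cont_integrable) (intro continuous_intros cg)
    have "integral ?S (\<lambda>\<nu>2. \<Sum>i\<in>UNIV. ctrans (tf2 A B M i (\<i> * complex_of_real \<nu>1) (\<i> * complex_of_real \<nu>2))
                  ** tf2 Ak Bk Mk i (\<i> * complex_of_real \<nu>1) (\<i> * complex_of_real \<nu>2))
        = integral ?S (\<lambda>\<nu>2. ?L ** g \<nu>2 ** ?Rr)"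
      unfolding T2_point[OF symM] g_def XP_def by simp
    also have "\<dots> = ?L ** integral ?S g ** ?Rr" using ig1 ig2 by (simp add: integral_lmul integral_rmul)
    also have "integral ?S g = (2 * pi) *\<^sub>R Yf w A Ak (Phi M Mk (XP \<nu>1))"
      unfolding Yf_def g_def using pi0 by simp
    finally show ?thesis unfolding h_def by (simp add: matrix_scalar_ac scalar_matrix_assoc)
  qed
  have quad: "integral ?S (\<lambda>\<nu>1. integral ?S (\<lambda>\<nu>2. \<Sum>i\<in>UNIV. ctrans (tf2 A B M i (\<i> * complex_of_real \<nu>1) (\<i> * complex_of_real \<nu>2))
                  ** tf2 Ak Bk Mk i (\<i> * complex_of_real \<nu>1) (\<i> * complex_of_real \<nu>2)))
      = (4 * pi\<^sup>2) *\<^sub>R (?L ** Z12 ** ?Rr)"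
  proof -
    have "integral ?S (\<lambda>\<nu>1. integral ?S (\<lambda>\<nu>2. \<Sum>i\<in>UNIV. ctrans (tf2 A B M i (\<i> * complex_of_real \<nu>1) (\<i> * complex_of_real \<nu>2))
                  ** tf2 Ak Bk Mk i (\<i> * complex_of_real \<nu>1) (\<i> * complex_of_real \<nu>2)))
        = integral ?S (\<lambda>\<nu>1. (2 * pi) *\<^sub>R h (XP \<nu>1))" unfolding inner ..
    also have "\<dots> = (2 * pi) *\<^sub>R h (integral ?S XP)"
      using integral_linear[OF iXP blh] by (simp add: o_def)
    also have "integral ?S XP = (2 * pi) *\<^sub>R Pf w A Ak ?XB"
      unfolding Pf_def XP_def using pi0 by simp
    also have "h ((2 * pi) *\<^sub>R Pf w A Ak ?XB) = (2 * pi) *\<^sub>R h P12"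
      unfolding Peq by (rule linear.scaleR[OF bounded_linear.linear[OF blh]])
    also have "h P12 = ?L ** Z12 ** ?Rr" unfolding h_def Zeq ..
    finally show ?thesis by (simp add: power2_eq_square)
  qed
  have "h2w_inner w (tf1 A B C) (tf2 A B M) (tf1 Ak Bk Ck) (tf2 Ak Bk Mk)
      = trace (?L ** Y12 ** ?Rr) + complex_of_real (1 / (4 * pi\<^sup>2)) * trace ((4 * pi\<^sup>2) *\<^sub>R (?L ** Z12 ** ?Rr))"
    unfolding h2w_inner_def lin lin2 quad ..
  also have "\<dots> = trace (?L ** Y12 ** ?Rr) + trace (?L ** Z12 ** ?Rr)"
  proof -
    have "complex_of_real (1 / (4 * pi\<^sup>2)) * trace ((4 * pi\<^sup>2) *\<^sub>R (?L ** Z12 ** ?Rr))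
       = complex_of_real (1 / (4 * pi\<^sup>2)) * ((4 * pi\<^sup>2) *\<^sub>R trace (?L ** Z12 ** ?Rr))"
      by (simp only: trace_scaleR)
    also have "\<dots> = trace (?L ** Z12 ** ?Rr)"
      using pi0 by (simp add: scaleR_conv_of_real)
    finally show ?thesis by simp
  qed
  also have "\<dots> = trace (?L ** (Y12 + Z12) ** ?Rr)"
    by (simp add: matrix_add_ldistrib matrix_add_rdistrib trace_add)
  finally show ?thesis .
qed


definition J1 :: "real \<Rightarrow> (complex \<Rightarrow> complex^'m^'p) \<Rightarrow> (complex \<Rightarrow> complex^'m^'p) \<Rightarrow> complex^'m^'m" where
  "J1 w X Y = integral {-w..w} (\<lambda>\<nu>. ctrans (X (\<i> * complex_of_real \<nu>)) ** Y (\<i> * complex_of_real \<nu>))"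

definition J2 :: "real \<Rightarrow> ('p::finite \<Rightarrow> complex \<Rightarrow> complex \<Rightarrow> complex^'m^'m) \<Rightarrow> ('p \<Rightarrow> complex \<Rightarrow> complex \<Rightarrow> complex^'m^'m) \<Rightarrow> complex^'m^'m" where
  "J2 w X Y = integral {-w..w} (\<lambda>\<nu>1. integral {-w..w} (\<lambda>\<nu>2.
        \<Sum>i\<in>UNIV. ctrans (X i (\<i> * complex_of_real \<nu>1) (\<i> * complex_of_real \<nu>2)) ** Y i (\<i> * complex_of_real \<nu>1) (\<i> * complex_of_real \<nu>2)))"

lemma norm_J: "h2w_norm_sq w X1 X2 = trace ((1 / (2*pi)) *\<^sub>R J1 w X1 X1 + (1 / (2*pi)^2) *\<^sub>R J2 w X2 X2)"
  unfolding h2w_norm_sq_def J1_def J2_def ..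

lemma joint_inner_integrable:
  fixes F :: "real \<Rightarrow> real \<Rightarrow> 'a::euclidean_space"
  assumes cF: "continuous_on UNIV (\<lambda>x. F (fst x) (snd x))"
  shows "F a integrable_on {c..d}"
proof -
  have "continuous_on UNIV (\<lambda>y. (\<lambda>x. F (fst x) (snd x)) (a, y))"
    by (intro continuous_on_compose2[OF cF] continuous_intros) auto
  then show ?thesis by (intro cont_integrable) simp
qed

lemma joint_outer_integrable:
  fixes F :: "real \<Rightarrow> real \<Rightarrow> 'a::euclidean_space"
  assumes cF: "continuous_on UNIV (\<lambda>x. F (fst x) (snd x))"
  shows "(\<lambda>a. integral {c..d} (F a)) integrable_on {c'..d'}"
proof -
  have "continuous_on (UNIV \<times> cbox c d) (\<lambda>(x, t). F x t)"
    using continuous_on_subset[OF cF] by (simp add: split_beta)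
  then have "continuous_on UNIV (\<lambda>x. integral (cbox c d) (F x))"
    by (rule integral_continuous_on_param)
  then show ?thesis by (intro cont_integrable) simp
qed

lemma inner_J:
  fixes X1 Y1 :: "complex \<Rightarrow> complex^'m^'p"
  assumes "continuous_on UNIV (\<lambda>\<nu>::real. X1 (\<i> * complex_of_real \<nu>))"
    and "continuous_on UNIV (\<lambda>\<nu>::real. Y1 (\<i> * complex_of_real \<nu>))"
  shows "h2w_inner w X1 X2 Y1 Y2 = complex_of_real (1/(2*pi)) * trace (J1 w X1 Y1) + complex_of_real (1 / (4*pi^2)) * trace (J2 w X2 Y2)"
proof -
  have "(\<lambda>\<nu>. ctrans (X1 (\<i> * complex_of_real \<nu>)) ** Y1 (\<i> * complex_of_real \<nu>)) integrable_on {-w..w}"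
    by (rule cont_integrable) (intro continuous_intros assms)
  then show ?thesis unfolding h2w_inner_def J1_def J2_def by (simp add: integral_trace)
qed

lemma J1_expand:
  fixes G1 K1 :: "complex \<Rightarrow> complex^'m^'p"
  assumes cG: "continuous_on UNIV (\<lambda>\<nu>::real. G1 (\<i> * complex_of_real \<nu>))"
    and cK: "continuous_on UNIV (\<lambda>\<nu>::real. K1 (\<i> * complex_of_real \<nu>))"
  shows "J1 w (\<lambda>s. G1 s - K1 s) (\<lambda>s. G1 s - K1 s) = J1 w G1 G1 - J1 w G1 K1 - J1 w K1 G1 + J1 w K1 K1"
proof -
  let ?g = "\<lambda>\<nu>::real. G1 (\<i> * complex_of_real \<nu>)" and ?k = "\<lambda>\<nu>::real. K1 (\<i> * complex_of_real \<nu>)"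
  have i: "(\<lambda>\<nu>. ctrans (X \<nu>) ** Y \<nu>) integrable_on {-w..w}"
    if "continuous_on UNIV X" "continuous_on UNIV Y" for X Y :: "real \<Rightarrow> complex^'m^'p"
    by (rule cont_integrable) (intro continuous_intros that)
  have pt: "ctrans (?g \<nu> - ?k \<nu>) ** (?g \<nu> - ?k \<nu>) = ctrans (?g \<nu>) ** ?g \<nu> - ctrans (?g \<nu>) ** ?k \<nu> - ctrans (?k \<nu>) ** ?g \<nu> + ctrans (?k \<nu>) ** ?k \<nu>" for \<nu>
    by (simp add: ctrans_diff matrix_diff_ldistrib matrix_diff_rdistrib algebra_simps)
  show ?thesis
    unfolding J1_def pt
    using i[OF cG cG] i[OF cG cK] i[OF cK cG] i[OF cK cK]
    by (simp add: integral_add integral_diff integrable_diff)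
qed

lemma J2_expand:
  fixes G2 K2 :: "'p::finite \<Rightarrow> complex \<Rightarrow> complex \<Rightarrow> complex^'m^'m"
  assumes cG: "\<And>i. continuous_on UNIV (\<lambda>x::real\<times>real. G2 i (\<i> * complex_of_real (fst x)) (\<i> * complex_of_real (snd x)))"
    and cK: "\<And>i. continuous_on UNIV (\<lambda>x::real\<times>real. K2 i (\<i> * complex_of_real (fst x)) (\<i> * complex_of_real (snd x)))"
  shows "J2 w (\<lambda>i s1 s2. G2 i s1 s2 - K2 i s1 s2) (\<lambda>i s1 s2. G2 i s1 s2 - K2 i s1 s2)
     = J2 w G2 G2 - J2 w G2 K2 - J2 w K2 G2 + J2 w K2 K2"
proof -
  define F where "F X Y a b = (\<Sum>i\<in>UNIV. ctrans (X i (\<i> * complex_of_real a) (\<i> * complex_of_real b)) ** Y i (\<i> * complex_of_real a) (\<i> * complex_of_real b))"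
    for X Y :: "'p \<Rightarrow> complex \<Rightarrow> complex \<Rightarrow> complex^'m^'m" and a b
  have cF: "continuous_on UNIV (\<lambda>x. F X Y (fst x) (snd x))"
    if "\<And>i. continuous_on UNIV (\<lambda>x::real\<times>real. X i (\<i> * complex_of_real (fst x)) (\<i> * complex_of_real (snd x)))"
       "\<And>i. continuous_on UNIV (\<lambda>x::real\<times>real. Y i (\<i> * complex_of_real (fst x)) (\<i> * complex_of_real (snd x)))" for X Y
    unfolding F_def by (intro continuous_intros that)
  note c1 = cF[OF cG cG] and c2 = cF[OF cG cK] and c3 = cF[OF cK cG] and c4 = cF[OF cK cK]
  have pt: "F (\<lambda>i s1 s2. G2 i s1 s2 - K2 i s1 s2) (\<lambda>i s1 s2. G2 i s1 s2 - K2 i s1 s2) a b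
     = F G2 G2 a b - F G2 K2 a b - F K2 G2 a b + F K2 K2 a b" for a b
    unfolding F_def
    by (simp add: ctrans_diff matrix_diff_ldistrib matrix_diff_rdistrib sum.distrib sum_subtractf algebra_simps)
  have inner: "integral {-w..w} (F (\<lambda>i s1 s2. G2 i s1 s2 - K2 i s1 s2) (\<lambda>i s1 s2. G2 i s1 s2 - K2 i s1 s2) a)
     = integral {-w..w} (F G2 G2 a) - integral {-w..w} (F G2 K2 a) - integral {-w..w} (F K2 G2 a) + integral {-w..w} (F K2 K2 a)" for a
    unfolding pt
    using joint_inner_integrable[OF c1, where a=a] joint_inner_integrable[OF c2, where a=a]
      joint_inner_integrable[OF c3, where a=a] joint_inner_integrable[OF c4, where a=a]
    by (simp add: integral_add integral_diff integrable_diff)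
  have "J2 w (\<lambda>i s1 s2. G2 i s1 s2 - K2 i s1 s2) (\<lambda>i s1 s2. G2 i s1 s2 - K2 i s1 s2)
      = integral {-w..w} (\<lambda>a. integral {-w..w} (F (\<lambda>i s1 s2. G2 i s1 s2 - K2 i s1 s2) (\<lambda>i s1 s2. G2 i s1 s2 - K2 i s1 s2) a))"
    unfolding J2_def F_def ..
  also have "\<dots> = J2 w G2 G2 - J2 w G2 K2 - J2 w K2 G2 + J2 w K2 K2"
    unfolding inner J2_def F_def[symmetric]
    using joint_outer_integrable[OF c1] joint_outer_integrable[OF c2]
      joint_outer_integrable[OF c3] joint_outer_integrable[OF c4]
    by (simp add: integral_add integral_diff integrable_diff)
  finally show ?thesis .
qed


lemma cnjm_mult: "map_matrix cnj (X ** Y) = map_matrix cnj X ** map_matrix cnj (Y::complex^'n^'k)"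
  by (simp add: matrix_matrix_mult_def vec_eq_iff cnj_sum)
lemma cnjm_ctrans: "map_matrix cnj (ctrans X) = ctrans (map_matrix cnj X)"
  by (simp add: ctrans_def transpose_def vec_eq_iff)
lemma cnjm_sum: "map_matrix cnj (sum f S) = sum (\<lambda>i. map_matrix cnj (f i :: complex^'n^'m)) S"
  by (induct S rule: infinite_finite_induct) (auto simp: vec_eq_iff)
lemma cnjm_diff: "map_matrix cnj (X - Y) = map_matrix cnj X - map_matrix cnj (Y::complex^'n^'m)"
  by (simp add: vec_eq_iff)
lemma cnjm_cmat: "map_matrix cnj (cmat X) = cmat X"
  by (simp add: vec_eq_iff cmat_def)
lemma cnjm_transpose: "map_matrix cnj (transpose X) = transpose (map_matrix cnj (X::complex^'n^'m))"
  by (simp add: vec_eq_iff transpose_def)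
lemma cnjm_mat: "map_matrix cnj (mat c) = (mat (cnj c) :: complex^'n^'n)"
  by (simp add: vec_eq_iff mat_def)
lemma trace_cnjm: "trace (map_matrix cnj X) = cnj (trace (X::complex^'n^'n))"
  by (simp add: trace_def cnj_sum)

lemma integral_reflect_sym: "integral {-w..w} (\<lambda>x. f (-x)) = integral {-w..w} (f::real \<Rightarrow> 'a::euclidean_space)"
proof -
  have "integral {- w .. - (- w)} (\<lambda>x. f (-x)) = integral {-w..w} f"
    by (rule Henstock_Kurzweil_Integration.integral_reflect_real)
  then show ?thesis by (simp only: minus_minus)
qed

lemma J1_swap:
  fixes G1 K1 :: "complex \<Rightarrow> complex^'m^'p"
  assumes cG: "continuous_on UNIV (\<lambda>\<nu>::real. G1 (\<i> * complex_of_real \<nu>))"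
    and cK: "continuous_on UNIV (\<lambda>\<nu>::real. K1 (\<i> * complex_of_real \<nu>))"
  shows "J1 w K1 G1 = ctrans (J1 w G1 K1)"
proof -
  have i: "(\<lambda>\<nu>. ctrans (G1 (\<i> * complex_of_real \<nu>)) ** K1 (\<i> * complex_of_real \<nu>)) integrable_on {-w..w}"
    by (rule cont_integrable) (intro continuous_intros cG cK)
  have "J1 w K1 G1 = integral {-w..w} (\<lambda>\<nu>. ctrans (ctrans (G1 (\<i> * complex_of_real \<nu>)) ** K1 (\<i> * complex_of_real \<nu>)))"
    unfolding J1_def by (simp add: ctrans_mult)
  also have "\<dots> = ctrans (J1 w G1 K1)" unfolding J1_def using i by (rule integral_ctrans)
  finally show ?thesis .
qed

lemma J2_swap:
  fixes G2 K2 :: "'p::finite \<Rightarrow> complex \<Rightarrow> complex \<Rightarrow> complex^'m^'m"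
  assumes cG: "\<And>i. continuous_on UNIV (\<lambda>x::real\<times>real. G2 i (\<i> * complex_of_real (fst x)) (\<i> * complex_of_real (snd x)))"
    and cK: "\<And>i. continuous_on UNIV (\<lambda>x::real\<times>real. K2 i (\<i> * complex_of_real (fst x)) (\<i> * complex_of_real (snd x)))"
  shows "J2 w K2 G2 = ctrans (J2 w G2 K2)"
proof -
  define F where "F a b = (\<Sum>i\<in>UNIV. ctrans (G2 i (\<i> * complex_of_real a) (\<i> * complex_of_real b)) ** K2 i (\<i> * complex_of_real a) (\<i> * complex_of_real b))" for a b
  have cF: "continuous_on UNIV (\<lambda>x. F (fst x) (snd x))"
    unfolding F_def by (intro continuous_intros cG cK)
  have "J2 w K2 G2 = integral {-w..w} (\<lambda>a. integral {-w..w} (\<lambda>b. ctrans (F a b)))"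
    unfolding J2_def F_def by (simp add: ctrans_sum ctrans_mult)
  also have "\<dots> = integral {-w..w} (\<lambda>a. ctrans (integral {-w..w} (F a)))"
    using joint_inner_integrable[OF cF] by (simp add: integral_ctrans)
  also have "\<dots> = ctrans (integral {-w..w} (\<lambda>a. integral {-w..w} (F a)))"
    using joint_outer_integrable[OF cF] by (simp add: integral_ctrans)
  also have "\<dots> = ctrans (J2 w G2 K2)" unfolding J2_def F_def ..
  finally show ?thesis .
qed

lemma inner_swap:
  fixes G1 K1 :: "complex \<Rightarrow> complex^'m^'p" and G2 K2 :: "'p::finite \<Rightarrow> complex \<Rightarrow> complex \<Rightarrow> complex^'m^'m"
  assumes cG1: "continuous_on UNIV (\<lambda>\<nu>::real. G1 (\<i> * complex_of_real \<nu>))"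
    and cK1: "continuous_on UNIV (\<lambda>\<nu>::real. K1 (\<i> * complex_of_real \<nu>))"
    and cG2: "\<And>i. continuous_on UNIV (\<lambda>x::real\<times>real. G2 i (\<i> * complex_of_real (fst x)) (\<i> * complex_of_real (snd x)))"
    and cK2: "\<And>i. continuous_on UNIV (\<lambda>x::real\<times>real. K2 i (\<i> * complex_of_real (fst x)) (\<i> * complex_of_real (snd x)))"
  shows "h2w_inner w K1 K2 G1 G2 = cnj (h2w_inner w G1 G2 K1 K2)"
  unfolding inner_J[OF cG1 cK1] inner_J[OF cK1 cG1] J1_swap[OF cG1 cK1] J2_swap[OF cG2 cK2]
  by (simp add: trace_ctrans)

lemma J1_real:
  fixes G1 K1 :: "complex \<Rightarrow> complex^'m^'p"
  assumes cG: "continuous_on UNIV (\<lambda>\<nu>::real. G1 (\<i> * complex_of_real \<nu>))"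
    and cK: "continuous_on UNIV (\<lambda>\<nu>::real. K1 (\<i> * complex_of_real \<nu>))"
    and sG: "\<And>\<nu>. G1 (\<i> * complex_of_real (-\<nu>)) = map_matrix cnj (G1 (\<i> * complex_of_real \<nu>))"
    and sK: "\<And>\<nu>. K1 (\<i> * complex_of_real (-\<nu>)) = map_matrix cnj (K1 (\<i> * complex_of_real \<nu>))"
  shows "map_matrix cnj (J1 w G1 K1) = J1 w G1 K1"
proof -
  define f where "f \<nu> = ctrans (G1 (\<i> * complex_of_real \<nu>)) ** K1 (\<i> * complex_of_real \<nu>)" for \<nu>
  have i: "f integrable_on {-w..w}" unfolding f_def
    by (rule cont_integrable) (intro continuous_intros cG cK)
  have "map_matrix cnj (J1 w G1 K1) = integral {-w..w} (\<lambda>\<nu>. map_matrix cnj (f \<nu>))"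
    unfolding J1_def f_def[symmetric] using i by (simp add: integral_cnjm)
  also have "(\<lambda>\<nu>. map_matrix cnj (f \<nu>)) = (\<lambda>\<nu>. f (-\<nu>))"
    unfolding f_def by (simp only: sG sK cnjm_mult cnjm_ctrans)
  also have "integral {-w..w} (\<lambda>\<nu>. f (-\<nu>)) = integral {-w..w} f"
    by (rule integral_reflect_sym)
  also have "\<dots> = J1 w G1 K1" unfolding J1_def f_def ..
  finally show ?thesis .
qed

lemma J2_real:
  fixes G2 K2 :: "'p::finite \<Rightarrow> complex \<Rightarrow> complex \<Rightarrow> complex^'m^'m"
  assumes cG: "\<And>i. continuous_on UNIV (\<lambda>x::real\<times>real. G2 i (\<i> * complex_of_real (fst x)) (\<i> * complex_of_real (snd x)))"
    and cK: "\<And>i. continuous_on UNIV (\<lambda>x::real\<times>real. K2 i (\<i> * complex_of_real (fst x)) (\<i> * complex_of_real (snd x)))"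
    and sG: "\<And>i a b. G2 i (\<i> * complex_of_real (-a)) (\<i> * complex_of_real (-b)) = map_matrix cnj (G2 i (\<i> * complex_of_real a) (\<i> * complex_of_real b))"
    and sK: "\<And>i a b. K2 i (\<i> * complex_of_real (-a)) (\<i> * complex_of_real (-b)) = map_matrix cnj (K2 i (\<i> * complex_of_real a) (\<i> * complex_of_real b))"
  shows "map_matrix cnj (J2 w G2 K2) = J2 w G2 K2"
proof -
  define F where "F a b = (\<Sum>i\<in>UNIV. ctrans (G2 i (\<i> * complex_of_real a) (\<i> * complex_of_real b)) ** K2 i (\<i> * complex_of_real a) (\<i> * complex_of_real b))" for a b
  have cF: "continuous_on UNIV (\<lambda>x. F (fst x) (snd x))"
    unfolding F_def by (intro continuous_intros cG cK)
  have pt: "map_matrix cnj (F a b) = F (-a) (-b)" for a b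
    unfolding F_def by (simp only: sG sK cnjm_mult cnjm_ctrans cnjm_sum)
  have "map_matrix cnj (J2 w G2 K2) = integral {-w..w} (\<lambda>a. map_matrix cnj (integral {-w..w} (F a)))"
    unfolding J2_def F_def[symmetric] using joint_outer_integrable[OF cF] by (simp add: integral_cnjm)
  also have "\<dots> = integral {-w..w} (\<lambda>a. integral {-w..w} (\<lambda>b. F (-a) (-b)))"
  proof -
    have "map_matrix cnj (integral {-w..w} (F a)) = integral {-w..w} (\<lambda>b. F (-a) (-b))" for a
      unfolding pt[symmetric] by (rule integral_cnjm[symmetric, OF joint_inner_integrable[OF cF]])
    then show ?thesis by (simp only:)
  qed
  also have "\<dots> = integral {-w..w} (\<lambda>a. integral {-w..w} (F (-a)))"
  proof -
    have "integral {-w..w} (\<lambda>b. F (-a) (-b)) = integral {-w..w} (F (-a))" for a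
      by (rule integral_reflect_sym)
    then show ?thesis by (simp only:)
  qed
  also have "\<dots> = integral {-w..w} (\<lambda>a. integral {-w..w} (F a))"
    by (rule integral_reflect_sym)
  also have "\<dots> = J2 w G2 K2" unfolding J2_def F_def ..
  finally show ?thesis .
qed

lemma inner_real:
  fixes G1 K1 :: "complex \<Rightarrow> complex^'m^'p" and G2 K2 :: "'p::finite \<Rightarrow> complex \<Rightarrow> complex \<Rightarrow> complex^'m^'m"
  assumes cG1: "continuous_on UNIV (\<lambda>\<nu>::real. G1 (\<i> * complex_of_real \<nu>))"
    and cK1: "continuous_on UNIV (\<lambda>\<nu>::real. K1 (\<i> * complex_of_real \<nu>))"
    and cG2: "\<And>i. continuous_on UNIV (\<lambda>x::real\<times>real. G2 i (\<i> * complex_of_real (fst x)) (\<i> * complex_of_real (snd x)))"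
    and cK2: "\<And>i. continuous_on UNIV (\<lambda>x::real\<times>real. K2 i (\<i> * complex_of_real (fst x)) (\<i> * complex_of_real (snd x)))"
    and sG1: "\<And>\<nu>. G1 (\<i> * complex_of_real (-\<nu>)) = map_matrix cnj (G1 (\<i> * complex_of_real \<nu>))"
    and sK1: "\<And>\<nu>. K1 (\<i> * complex_of_real (-\<nu>)) = map_matrix cnj (K1 (\<i> * complex_of_real \<nu>))"
    and sG2: "\<And>i a b. G2 i (\<i> * complex_of_real (-a)) (\<i> * complex_of_real (-b)) = map_matrix cnj (G2 i (\<i> * complex_of_real a) (\<i> * complex_of_real b))"
    and sK2: "\<And>i a b. K2 i (\<i> * complex_of_real (-a)) (\<i> * complex_of_real (-b)) = map_matrix cnj (K2 i (\<i> * complex_of_real a) (\<i> * complex_of_real b))"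
  shows "cnj (h2w_inner w G1 G2 K1 K2) = h2w_inner w G1 G2 K1 K2"
proof -
  have "cnj (trace (J1 w G1 K1)) = trace (J1 w G1 K1)"
    using trace_cnjm[of "J1 w G1 K1"] unfolding J1_real[OF cG1 cK1 sG1 sK1] by (rule sym)
  moreover have "cnj (trace (J2 w G2 K2)) = trace (J2 w G2 K2)"
    using trace_cnjm[of "J2 w G2 K2"] unfolding J2_real[OF cG2 cK2 sG2 sK2] by (rule sym)
  ultimately show ?thesis unfolding inner_J[OF cG1 cK1] by simp
qed

lemma norm_expand:
  fixes G1 K1 :: "complex \<Rightarrow> complex^'m^'p" and G2 K2 :: "'p::finite \<Rightarrow> complex \<Rightarrow> complex \<Rightarrow> complex^'m^'m"
  assumes cG1: "continuous_on UNIV (\<lambda>\<nu>::real. G1 (\<i> * complex_of_real \<nu>))"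
    and cK1: "continuous_on UNIV (\<lambda>\<nu>::real. K1 (\<i> * complex_of_real \<nu>))"
    and cG2: "\<And>i. continuous_on UNIV (\<lambda>x::real\<times>real. G2 i (\<i> * complex_of_real (fst x)) (\<i> * complex_of_real (snd x)))"
    and cK2: "\<And>i. continuous_on UNIV (\<lambda>x::real\<times>real. K2 i (\<i> * complex_of_real (fst x)) (\<i> * complex_of_real (snd x)))"
  shows "h2w_norm_sq w (\<lambda>s. G1 s - K1 s) (\<lambda>i s1 s2. G2 i s1 s2 - K2 i s1 s2)
       = h2w_norm_sq w G1 G2 - h2w_inner w G1 G2 K1 K2 - h2w_inner w K1 K2 G1 G2 + h2w_norm_sq w K1 K2"
proof -
  have e: "(1 / (2*pi))^2 = 1 / (4*pi^2)" by (simp add: power2_eq_square)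
  show ?thesis
    unfolding norm_J J1_expand[OF cG1 cK1] J2_expand[OF cG2 cK2] inner_J[OF cG1 cK1] inner_J[OF cK1 cG1]
    by (simp only: trace_add trace_sub trace_scaleR scaleR_right_diff_distrib scaleR_right_distrib)
       (simp add: scaleR_conv_of_real e algebra_simps)
qed


lemma rv_sym: assumes hA: "hurwitz A" shows "rv A (-\<nu>) = map_matrix cnj (rv A \<nu>)"
proof (rule matrix_inv_unique[of "mat (\<i> * complex_of_real (-\<nu>)) - cmat A", folded resolvent_def])
  have e: "mat (\<i> * complex_of_real (-\<nu>)) - cmat A = map_matrix cnj (mat (\<i> * complex_of_real \<nu>) - cmat A)"
    by (simp add: cnjm_diff cnjm_mat cnjm_cmat)
  show "(mat (\<i> * complex_of_real (-\<nu>)) - cmat A) ** map_matrix cnj (rv A \<nu>) = mat 1"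
    unfolding e cnjm_mult[symmetric] rv_left[OF hA] by (simp add: cnjm_mat)
qed

lemma tf1_sym: "hurwitz A \<Longrightarrow> tf1 A B C (\<i> * complex_of_real (-\<nu>)) = map_matrix cnj (tf1 A B C (\<i> * complex_of_real \<nu>))"
  unfolding tf1_def by (simp only: rv_sym cnjm_mult cnjm_cmat)

lemma tf2_sym: "hurwitz A \<Longrightarrow> tf2 A B M i (\<i> * complex_of_real (-a)) (\<i> * complex_of_real (-b))
    = map_matrix cnj (tf2 A B M i (\<i> * complex_of_real a) (\<i> * complex_of_real b))"
  unfolding tf2_def by (simp only: rv_sym cnjm_mult cnjm_cmat cnjm_ctrans cnjm_transpose)

lemma tf1_cont: "hurwitz A \<Longrightarrow> continuous_on UNIV (\<lambda>\<nu>::real. tf1 A B C (\<i> * complex_of_real \<nu>))"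
  unfolding tf1_def by (intro continuous_intros) auto

lemma tf2_cont: "hurwitz A \<Longrightarrow> continuous_on UNIV (\<lambda>x::real\<times>real. tf2 A B M i (\<i> * complex_of_real (fst x)) (\<i> * complex_of_real (snd x)))"
  unfolding tf2_def by (intro continuous_intros) auto

theorem corollary1:
  fixes A :: "real^'n^'n" and B :: "real^'m^'n" and C :: "real^'n^'p"
    and M :: "'p \<Rightarrow> real^'n^'n"
    and Ak :: "real^'k^'k" and Bk :: "real^'m^'k" and Ck :: "real^'k^'p"
    and Mk :: "'p \<Rightarrow> real^'k^'k"
    and w :: real
    and P12 Y12 Z12 Q12 :: "complex^'k^'n"
  assumes hA: "hurwitz A" and hAk: "hurwitz Ak"
    and symM: "\<And>i. transpose (M i) = M i"
    and symMk: "\<And>i. transpose (Mk i) = Mk i"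
    and w_pos: "0 < w"
    and P12: "cmat A ** P12 + P12 ** transpose (cmat Ak)
              + Fw w A ** cmat B ** transpose (cmat Bk)
              + cmat B ** transpose (cmat Bk) ** ctrans (Fw w Ak) = 0"
    and Y12: "transpose (cmat A) ** Y12 + Y12 ** cmat Ak
              + ctrans (Fw w A) ** transpose (cmat C) ** cmat Ck
              + transpose (cmat C) ** cmat Ck ** Fw w Ak = 0"
    and Z12: "transpose (cmat A) ** Z12 + Z12 ** cmat Ak
              + (\<Sum>i\<in>UNIV. ctrans (Fw w A) ** cmat (M i) ** P12 ** cmat (Mk i)
                           + cmat (M i) ** P12 ** cmat (Mk i) ** Fw w Ak) = 0"
    and Q12: "Q12 = Y12 + Z12"
  shows "h2w_norm_sq w (\<lambda>s. tf1 A B C s - tf1 Ak Bk Ck s)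
                       (\<lambda>i s1 s2. tf2 A B M i s1 s2 - tf2 Ak Bk Mk i s1 s2)
         = h2w_norm_sq w (tf1 A B C) (tf2 A B M)
           - 2 * h2w_inner w (tf1 A B C) (tf2 A B M) (tf1 Ak Bk Ck) (tf2 Ak Bk Mk)
           + h2w_norm_sq w (tf1 Ak Bk Ck) (tf2 Ak Bk Mk)
       \<and> h2w_inner w (tf1 A B C) (tf2 A B M) (tf1 Ak Bk Ck) (tf2 Ak Bk Mk)
           = trace (transpose (cmat B) ** (Y12 + Z12) ** cmat Bk)
       \<and> h2w_inner w (tf1 A B C) (tf2 A B M) (tf1 Ak Bk Ck) (tf2 Ak Bk Mk)
           = trace (transpose (cmat B) ** Q12 ** cmat Bk)"
proof -
  note cG1 = tf1_cont[OF hA, of B C] and cK1 = tf1_cont[OF hAk, of Bk Ck]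
  note cG2 = tf2_cont[OF hA, of B M] and cK2 = tf2_cont[OF hAk, of Bk Mk]
  have inner: "h2w_inner w (tf1 A B C) (tf2 A B M) (tf1 Ak Bk Ck) (tf2 Ak Bk Mk)
           = trace (transpose (cmat B) ** (Y12 + Z12) ** cmat Bk)"
    by (rule inner_formula[OF hA hAk symM symMk P12 Y12 Z12])
  have swap: "h2w_inner w (tf1 Ak Bk Ck) (tf2 Ak Bk Mk) (tf1 A B C) (tf2 A B M)
      = h2w_inner w (tf1 A B C) (tf2 A B M) (tf1 Ak Bk Ck) (tf2 Ak Bk Mk)"
    unfolding inner_swap[OF cG1 cK1 cG2 cK2]
    by (rule inner_real[OF cG1 cK1 cG2 cK2 tf1_sym[OF hA] tf1_sym[OF hAk] tf2_sym[OF hA] tf2_sym[OF hAk]])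
  have "h2w_norm_sq w (\<lambda>s. tf1 A B C s - tf1 Ak Bk Ck s)
                       (\<lambda>i s1 s2. tf2 A B M i s1 s2 - tf2 Ak Bk Mk i s1 s2)
         = h2w_norm_sq w (tf1 A B C) (tf2 A B M)
           - 2 * h2w_inner w (tf1 A B C) (tf2 A B M) (tf1 Ak Bk Ck) (tf2 Ak Bk Mk)
           + h2w_norm_sq w (tf1 Ak Bk Ck) (tf2 Ak Bk Mk)"
    unfolding norm_expand[OF cG1 cK1 cG2 cK2] swap by simp
  then show ?thesis using inner Q12 by simp
qed


end
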